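(* For all $k\ge0$, $$\|\mathbf H^{k+1}-\tilde{\mathbf H}^{k+1}\|_F\le\big(1-\delta+2\gamma(1-\delta)\big)\|\mathbf H^k-\tilde{\mathbf H}^k\|_F+4\gamma\|\mathbf E^k\|_F+2\gamma\|\mathbf H^k-\mathbf W^\infty\mathbf H^k\|_F+L_2\|\mathbf x^{k+1}-\mathbf x^k\|.$$
   Context: $W\in\mathbb{R}^{n\times n}$ is entrywise nonnegative, symmetric, $W1_n=1_n$, with $w_{ij}=0$ iff $j$ is neither $i$ nor a neighbor of $i$ in an undirected connected graph. Each $f_i:\mathbb{R}^d\to\mathbb{R}$ is $C^2$ with $L_1$-Lipschitz gradient and $L_2$-Lipschitz Hessian. $\mathcal Q:\mathbb{R}^{d\times d}\to\mathbb{R}^{d\times d}$ is deterministic with $\|\mathcal Q(A)-A\|_F\le(1-\delta)\|A\|_F$, $\delta\in(0,1]$, applied blockwise to $nd\times d$ matrices. Notation: $\mathbf x=[x_1;\dots;x_n]\in\mathbb{R}^{nd}$; $\mathbf W=W\otimes I_d$, $\mathbf W^\infty=\frac1n1_n1_n^T\otimes I_d$; $\nabla^2f(\mathbf x)=[\nabla^2f_1(x_1);\dots;\nabla^2f_n(x_n)]\in\mathbb{R}^{nd\times d}$. With $\gamma>0$, arbitrary points $\mathbf x^k\in\mathbb{R}^{nd}$, and arbitrary $\mathbf E^0,\tilde{\mathbf H}^0$, $H_i^0=\nabla^2f_i(x_i^0)$, the sequences satisfy for $k\ge0$: $\mathbf E^{k+1}=\mathbf E^k+\mathbf H^k-\tilde{\mathbf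 H}^k-\mathcal Q(\mathbf E^k+\mathbf H^k-\tilde{\mathbf H}^k)$; $\tilde{\mathbf H}^{k+1}=\tilde{\mathbf H}^k+\mathcal Q(\mathbf H^k-\tilde{\mathbf H}^k)$; $\hat{\mathbf H}^k=\tilde{\mathbf H}^k+\mathcal Q(\mathbf E^k+\mathbf H^k-\tilde{\mathbf H}^k)$; $\mathbf H^{k+1}=\mathbf H^k-\gamma(I_{nd}-\mathbf W)\hat{\mathbf H}^k+\nabla^2f(\mathbf x^{k+1})-\nabla^2f(\mathbf x^k)$. *)

theory Defs
  imports "HOL-Analysis.Analysis"
begin

text \<open>Agents are indexed by a finite type 'n, coordinates by a finite type 'd.
  A stacked vector x = [x_1;...;x_n] in R^{nd} is an element of real^'d^'n and a
  stacked nd x d matrix [A_1;...;A_n] is an element of real^'d^'d^'n.  The library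
  norm on these iterated Cartesian types is the Euclidean / Frobenius norm.\<close>

type_synonym ('d,'n) stackvec = "real^'d^'n"
type_synonym ('d,'n) stackmat = "real^'d^'d^'n"

text \<open>(W \<otimes> I_d) applied to a stacked matrix: block i is sum_j w_ij A_j.\<close>
definition kronW :: "real^'n^'n \<Rightarrow> real^'d^'d^'n \<Rightarrow> real^'d^'d^'n" where
  "kronW W A = (\<chi> i. \<Sum>j\<in>UNIV. W$i$j *\<^sub>R A$j)"

text \<open>(I_{nd} - W \<otimes> I_d) applied to a stacked matrix.\<close>
definition lapW :: "real^'n^'n \<Rightarrow> real^'d^'d^'n \<Rightarrow> real^'d^'d^'n" where
  "lapW W A = A - kronW W A"

text \<open>W^\<infinity> = (1/n) 1 1^T \<otimes> I_d applied to a stacked matrix.\<close>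
definition avgW :: "real^'d^'d^'n \<Rightarrow> real^'d^'d^'n" where
  "avgW A = (\<chi> i. (1 / real CARD('n)) *\<^sub>R (\<Sum>j\<in>UNIV. A$j))"

definition blockQ :: "(real^'d^'d \<Rightarrow> real^'d^'d) \<Rightarrow> real^'d^'d^'n \<Rightarrow> real^'d^'d^'n" where
  "blockQ Q A = (\<chi> i. Q (A$i))"

definition hess_stack :: "('n \<Rightarrow> real^'d \<Rightarrow> real^'d^'d) \<Rightarrow> real^'d^'n \<Rightarrow> real^'d^'d^'n" where
  "hess_stack hess x = (\<chi> i. hess i (x$i))"

definition connected_graph :: "('n \<Rightarrow> 'n \<Rightarrow> bool) \<Rightarrow> bool" where
  "connected_graph G \<longleftrightarrow> (\<forall>i j. G i j \<longleftrightarrow> G j i) \<and> (\<forall>i. \<not> G i i) \<and> (\<forall>i j. G\<^sup>*\<^sup>* i j)"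

definition mixing_matrix :: "real^'n^'n \<Rightarrow> bool" where
  "mixing_matrix W \<longleftrightarrow>
     (\<forall>i j. W$i$j \<ge> 0) \<and> transpose W = W \<and> W *v (\<chi> i. 1) = (\<chi> i. 1) \<and>
     (\<exists>G. connected_graph G \<and> (\<forall>i j. W$i$j = 0 \<longleftrightarrow> (j \<noteq> i \<and> \<not> G i j)))"

end

theory Submission
  imports Defs
begin



lemma norm_sq_vec: "(norm (x::'a::real_normed_vector^'n))^2 = (\<Sum>i\<in>UNIV. norm (x$i)^2)"
  by (simp add: norm_vec_def L2_set_def sum_nonneg)

lemma block_bound:
  fixes A :: "'a::real_normed_vector^'n" and B :: "'b::real_normed_vector^'n"
  assumes "\<And>i. norm (A$i) \<le> c * norm (B$i)" "c \<ge> 0"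
  shows "norm A \<le> c * norm B"
proof -
  have "(norm A)^2 \<le> (c * norm B)^2"
  proof -
    have "(norm A)^2 = (\<Sum>i\<in>UNIV. norm (A$i)^2)" by (rule norm_sq_vec)
    also have "\<dots> \<le> (\<Sum>i\<in>UNIV. (c * norm (B$i))^2)"
      by (rule sum_mono, rule power_mono[OF assms(1)], simp)
    also have "\<dots> = c^2 * (norm B)^2" by (simp add: norm_sq_vec power_mult_distrib sum_distrib_left)
    finally show ?thesis by (simp add: power_mult_distrib)
  qed
  thus ?thesis by (rule power2_le_imp_le) (use assms(2) in simp)
qed

lemma jensen_sq:
  fixes w a :: "'j \<Rightarrow> real"
  assumes "finite S" "\<And>j. j \<in> S \<Longrightarrow> w j \<ge> 0" "sum w S = 1"
  shows "(\<Sum>j\<in>S. w j * a j)^2 \<le> (\<Sum>j\<in>S. w j * (a j)^2)"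
proof -
  define m where "m = (\<Sum>j\<in>S. w j * a j)"
  have "0 \<le> (\<Sum>j\<in>S. w j * (a j - m)^2)" using assms(2) by (intro sum_nonneg) simp
  also have "\<dots> = (\<Sum>j\<in>S. w j * (a j)^2) - 2 * m * (\<Sum>j\<in>S. w j * a j) + m^2 * sum w S"
    by (simp add: power2_eq_square algebra_simps sum.distrib sum_subtractf sum_distrib_left sum_distrib_right)
  finally show ?thesis using assms(3) by (simp add: m_def power2_eq_square)
qed

lemma kronW_norm:
  fixes A :: "real^'d^'d^'n"
  assumes W: "mixing_matrix W"
  shows "norm (kronW W A) \<le> norm A"
proof -
  have nn: "\<And>i j. W$i$j \<ge> 0" and sym: "\<And>i j. W$i$j = W$j$i"
    and rs: "\<And>i. (\<Sum>j\<in>UNIV. W$i$j) = 1"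
  proof -
    show "\<And>i j. W$i$j \<ge> 0" using W by (simp add: mixing_matrix_def)
    have "transpose W = W" using W by (simp add: mixing_matrix_def)
    then show "\<And>i j. W$i$j = W$j$i" by (metis transpose_def vec_lambda_beta)
    have "W *v (\<chi> i. 1) = (\<chi> i. 1)" using W by (simp add: mixing_matrix_def)
    then show "\<And>i. (\<Sum>j\<in>UNIV. W$i$j) = 1"
      by (metis (no_types, lifting) matrix_vector_mult_def vec_lambda_beta mult.right_neutral sum.cong)
  qed
  have row: "norm (kronW W A $ i)^2 \<le> (\<Sum>j\<in>UNIV. W$i$j * norm (A$j)^2)" for i
  proof -
    have "norm (kronW W A $ i) \<le> (\<Sum>j\<in>UNIV. W$i$j * norm (A$j))"
      unfolding kronW_def vec_lambda_beta
      by (rule order_trans[OF norm_sum]) (simp add: nn)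
    hence "norm (kronW W A $ i)^2 \<le> (\<Sum>j\<in>UNIV. W$i$j * norm (A$j))^2"
      by (simp add: power_mono)
    also have "\<dots> \<le> (\<Sum>j\<in>UNIV. W$i$j * norm (A$j)^2)"
      by (rule jensen_sq) (use nn rs in auto)
    finally show ?thesis .
  qed
  have "(norm (kronW W A))^2 \<le> (\<Sum>i\<in>UNIV. \<Sum>j\<in>UNIV. W$i$j * norm (A$j)^2)"
    unfolding norm_sq_vec[of "kronW W A"] by (rule sum_mono, rule row)
  also have "\<dots> = (\<Sum>j\<in>UNIV. (\<Sum>i\<in>UNIV. W$j$i) * norm (A$j)^2)"
  proof -
    have "(\<Sum>i\<in>UNIV. \<Sum>j\<in>UNIV. W$i$j * norm (A$j)^2) = (\<Sum>j\<in>UNIV. \<Sum>i\<in>UNIV. W$i$j * norm (A$j)^2)"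
      by (rule sum.swap)
    also have "\<dots> = (\<Sum>j\<in>UNIV. (\<Sum>i\<in>UNIV. W$i$j) * norm (A$j)^2)"
      by (simp only: sum_distrib_right)
    also have "\<dots> = (\<Sum>j\<in>UNIV. (\<Sum>i\<in>UNIV. W$j$i) * norm (A$j)^2)"
      by (simp only: sym[of _ "_::'n"])
    finally show ?thesis .
  qed
  also have "\<dots> = (\<Sum>j\<in>UNIV. norm (A$j)^2)" by (simp only: rs mult_1)
  also have "\<dots> = (norm A)^2" by (rule norm_sq_vec[symmetric])
  finally have "(norm (kronW W A))^2 \<le> (norm A)^2" .
  thus ?thesis by (rule power2_le_imp_le) simp
qed


theorem lemma7:
  fixes W :: "real^'n^'n"
    and f :: "'n \<Rightarrow> real^'d \<Rightarrow> real"
    and grad :: "'n \<Rightarrow> real^'d \<Rightarrow> real^'d"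
    and hess :: "'n \<Rightarrow> real^'d \<Rightarrow> real^'d^'d"
    and L1 L2 \<gamma> \<delta> :: real
    and Q :: "real^'d^'d \<Rightarrow> real^'d^'d"
    and x :: "nat \<Rightarrow> real^'d^'n"
    and E Ht Hh H :: "nat \<Rightarrow> real^'d^'d^'n"
  assumes W: "mixing_matrix W"
    and f_grad: "\<And>i y. (f i has_derivative (\<lambda>h. grad i y \<bullet> h)) (at y)"
    and f_hess: "\<And>i y. (grad i has_derivative (\<lambda>h. hess i y *v h)) (at y)"
    and hess_cont: "\<And>i. continuous_on UNIV (hess i)"
    and L1: "\<And>i y z. norm (grad i y - grad i z) \<le> L1 * norm (y - z)"
    and L2: "\<And>i y z. norm (hess i y - hess i z) \<le> L2 * norm (y - z)"
    and Q: "\<And>A. norm (Q A - A) \<le> (1 - \<delta>) * norm A"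
    and \<delta>: "0 < \<delta>" "\<delta> \<le> 1"
    and \<gamma>: "0 < \<gamma>"
    and H0: "H 0 = hess_stack hess (x 0)"
    and E_rec: "\<And>k. E (Suc k) = E k + H k - Ht k - blockQ Q (E k + H k - Ht k)"
    and Ht_rec: "\<And>k. Ht (Suc k) = Ht k + blockQ Q (H k - Ht k)"
    and Hh_def: "\<And>k. Hh k = Ht k + blockQ Q (E k + H k - Ht k)"
    and H_rec: "\<And>k. H (Suc k) = H k - \<gamma> *\<^sub>R lapW W (Hh k)
                   + hess_stack hess (x (Suc k)) - hess_stack hess (x k)"
  shows "norm (H (Suc k) - Ht (Suc k))
           \<le> (1 - \<delta> + 2 * \<gamma> * (1 - \<delta>)) * norm (H k - Ht k) + 4 * \<gamma> * norm (E k)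
             + 2 * \<gamma> * norm (H k - avgW (H k)) + L2 * norm (x (Suc k) - x k)"
proof -
  have nn: "\<And>i j. W$i$j \<ge> 0" using W by (simp add: mixing_matrix_def)
  have rs: "\<And>i. (\<Sum>j\<in>UNIV. W$i$j) = 1"
  proof -
    have "W *v (\<chi> i. 1) = (\<chi> i. 1)" using W by (simp add: mixing_matrix_def)
    then show "\<And>i. (\<Sum>j\<in>UNIV. W$i$j) = 1"
      by (metis (no_types, lifting) matrix_vector_mult_def vec_lambda_beta mult.right_neutral sum.cong)
  qed
  have L2nn: "L2 \<ge> 0"
  proof -
    define v :: "real^'d" where "v = (\<chi> i. 1)"
    have vp: "norm (0 - v) > 0" by (simp add: v_def vec_eq_iff)
    have "norm (hess i 0 - hess i v) \<le> L2 * norm (0 - v)" for i :: 'n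
      by (rule L2)
    hence "0 \<le> L2 * norm (0 - v)"
      by (meson norm_ge_zero order_trans)
    thus ?thesis using vp by (simp add: zero_le_mult_iff)
  qed
  have lapnorm: "norm (lapW W B) \<le> 2 * norm B" for B :: "real^'d^'d^'n"
    unfolding lapW_def using norm_triangle_ineq4[of B "kronW W B"] kronW_norm[OF W, of B] by linarith
  have lapavg: "lapW W (avgW B) = 0" for B :: "real^'d^'d^'n"
  proof -
    have "kronW W (avgW B) = avgW B"
    proof -
      have "kronW W (avgW B) = (\<chi> i. (\<Sum>j\<in>UNIV. W$i$j) *\<^sub>R ((1 / real CARD('n)) *\<^sub>R (\<Sum>j\<in>UNIV. B$j)))"
        unfolding kronW_def avgW_def by (simp only: vec_lambda_beta scaleR_sum_left)
      thus ?thesis by (simp add: rs avgW_def)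
    qed
    thus ?thesis by (simp add: lapW_def)
  qed
  have lapdiff: "lapW W (A + B) = lapW W A + lapW W B" "lapW W (A - B) = lapW W A - lapW W B"
    for A B :: "real^'d^'d^'n"
    by (simp_all add: lapW_def kronW_def vec_eq_iff scaleR_right_diff_distrib scaleR_right_distrib
        sum.distrib sum_subtractf algebra_simps)
  have bq: "norm (blockQ Q A - A) \<le> (1 - \<delta>) * norm A" for A :: "real^'d^'d^'n"
    by (rule block_bound) (use Q \<delta> in \<open>auto simp: blockQ_def\<close>)
  have hs: "norm (hess_stack hess (x (Suc k)) - hess_stack hess (x k)) \<le> L2 * norm (x (Suc k) - x k)"
    by (rule block_bound) (use L2 L2nn in \<open>auto simp: hess_stack_def\<close>)
  define D where "D = H k - Ht k"
  define R where "R = E k + D"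
  define P where "P = blockQ Q R - R"
  have HhR: "Hh k = H k + E k + P"
    unfolding Hh_def P_def R_def D_def by (simp add: algebra_simps)
  have main: "H (Suc k) - Ht (Suc k) = (D - blockQ Q D) - \<gamma> *\<^sub>R lapW W (Hh k)
      + (hess_stack hess (x (Suc k)) - hess_stack hess (x k))"
    unfolding H_rec Ht_rec D_def by (simp add: algebra_simps)
  have t1: "norm (D - blockQ Q D) \<le> (1 - \<delta>) * norm D"
    using bq[of D] by (simp add: norm_minus_commute)
  have "Hh k = (H k - avgW (H k)) + (avgW (H k) + (E k + P))"
    unfolding HhR by (simp add: algebra_simps)
  hence "lapW W (Hh k) = lapW W (H k - avgW (H k)) + (lapW W (avgW (H k)) + lapW W (E k + P))"
    by (metis lapdiff(1))
  hence lh: "lapW W (Hh k) = lapW W (H k - avgW (H k)) + lapW W (E k + P)"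
    by (simp add: lapavg)
  have t2a: "norm (lapW W (Hh k)) \<le> 2 * norm (H k - avgW (H k)) + 2 * norm (E k + P)"
    unfolding lh
    using norm_triangle_ineq[of "lapW W (H k - avgW (H k))" "lapW W (E k + P)"]
      lapnorm[of "H k - avgW (H k)"] lapnorm[of "E k + P"] by linarith
  have nP: "norm P \<le> (1 - \<delta>) * norm R" using bq[of R] by (simp add: P_def)
  have nR: "norm R \<le> norm (E k) + norm D" unfolding R_def by (rule norm_triangle_ineq)
  have "(1 - \<delta>) * norm R \<le> (1 - \<delta>) * (norm (E k) + norm D)"
    using nR \<delta> by (intro mult_left_mono) auto
  hence nP2: "norm P \<le> (1 - \<delta>) * (norm (E k) + norm D)" using nP by linarith
  have nEP: "norm (E k + P) \<le> norm (E k) + norm P" by (rule norm_triangle_ineq)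
  have ed: "(1 - \<delta>) * norm (E k) \<le> norm (E k)" using \<delta> mult_right_mono[of "1 - \<delta>" 1 "norm (E k)"] by simp
  have t2: "norm (lapW W (Hh k)) \<le> 2 * norm (H k - avgW (H k)) + 4 * norm (E k) + 2 * (1 - \<delta>) * norm D"
    using t2a nP2 nEP ed by (simp add: algebra_simps)
  define a where "a = D - blockQ Q D"
  define b where "b = lapW W (Hh k)"
  define c where "c = hess_stack hess (x (Suc k)) - hess_stack hess (x k)"
  have "norm (a - \<gamma> *\<^sub>R b + c) \<le> norm (a - \<gamma> *\<^sub>R b) + norm c" by (rule norm_triangle_ineq)
  moreover have "norm (a - \<gamma> *\<^sub>R b) \<le> norm a + norm (\<gamma> *\<^sub>R b)" by (rule norm_triangle_ineq4)
  moreover have "norm (\<gamma> *\<^sub>R b) = \<gamma> * norm b" using \<gamma> by simp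
  ultimately have tri: "norm (a - \<gamma> *\<^sub>R b + c) \<le> norm a + \<gamma> * norm b + norm c" by linarith
  have gb: "\<gamma> * norm b \<le> \<gamma> * (2 * norm (H k - avgW (H k)) + 4 * norm (E k) + 2 * (1 - \<delta>) * norm D)"
    using t2 \<gamma> unfolding b_def by (intro mult_left_mono) auto
  have "norm (H (Suc k) - Ht (Suc k)) \<le> (1 - \<delta>) * norm D + \<gamma> * (2 * norm (H k - avgW (H k)) + 4 * norm (E k) + 2 * (1 - \<delta>) * norm D)
      + L2 * norm (x (Suc k) - x k)"
    using tri gb t1 hs unfolding main a_def[symmetric] b_def[symmetric] c_def[symmetric] by linarith
  thus ?thesis by (simp add: D_def algebra_simps)
qed

end
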